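(* Let $\mathbf{X},\mathbf{Y}$ be Banach spaces, $\mathcal{S}\subset\mathbf{X}$, $\mathcal{S}'\subset\mathbf{Y}$. Assume $\Phi:\mathcal{S}\to\mathbf{Y}$ is Lipschitz continuous and $\Phi(\mathcal{S})\supset\mathcal{S}'$. Then $s^\ast_{\mathbf{Y}}(\mathcal{S}')\ge s^\ast_{\mathbf{X}}(\mathcal{S})$.
   Context: For a real Banach space $\mathbf{X}$ and $\mathcal{S}\subset\mathbf{X}$: a codec is a sequence $((E_R,D_R))_{R\in\mathbb{N}}$ of maps $E_R:\mathcal{S}\to\{0,1\}^R$, $D_R:\{0,1\}^R\to\mathbf{X}$; distortion $\delta_{\mathcal{S},\mathbf{X}}(E_R,D_R)=\sup_{\mathbf{x}\in\mathcal{S}}\|\mathbf{x}-D_R(E_R(\mathbf{x}))\|_{\mathbf{X}}$; optimal compression rate $s^\ast_{\mathbf{X}}(\mathcal{S})=\sup\{s\ge0:\exists\text{ codec with }\sup_RR^s\delta_{\mathcal{S},\mathbf{X}}(E_R,D_R)<\infty\}\in[0,\infty]$. *)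

theory Defs
  imports "HOL-Analysis.Analysis"
begin

text \<open>Bit strings in {0,1}^R are boolean lists of length R.
  A codec is a pair of sequences (E R, D R), R = 1, 2, ..., with
  E R : S -> {0,1}^R and D R : {0,1}^R -> X.\<close>

definition is_codec :: "'a set \<Rightarrow> (nat \<Rightarrow> 'a \<Rightarrow> bool list) \<Rightarrow> (nat \<Rightarrow> bool list \<Rightarrow> 'a) \<Rightarrow> bool" where
  "is_codec S E D \<longleftrightarrow> (\<forall>R\<ge>1. \<forall>x\<in>S. length (E R x) = R)"

definition distortion :: "'a::real_normed_vector set \<Rightarrow> ('a \<Rightarrow> bool list) \<Rightarrow> (bool list \<Rightarrow> 'a) \<Rightarrow> ereal" where
  "distortion S E D = (SUP x\<in>S. ereal (norm (x - D (E x))))"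

definition achievable_rate :: "'a::real_normed_vector set \<Rightarrow> real \<Rightarrow> bool" where
  "achievable_rate S s \<longleftrightarrow>
     (\<exists>E D. is_codec S E D \<and>
        (SUP R\<in>{1::nat..}. ereal (real R powr s) * distortion S (E R) (D R)) < \<infinity>)"

text \<open>Optimal compression rate, a value in [0, infinity] (sup of the empty set taken as 0).\<close>
definition optimal_rate :: "'a::real_normed_vector set \<Rightarrow> ereal" where
  "optimal_rate S = Sup ({0} \<union> ereal ` {s. s \<ge> 0 \<and> achievable_rate S s})"

end

theory Submission
  imports Defs
begin

lemma ereal_fin_bound: "(x::ereal) < \<infinity> \<Longrightarrow> \<exists>C. x \<le> ereal C"
  by (cases x) auto

lemma achievable_transfer:
  fixes S :: "'a::banach set" and S' :: "'b::banach set" and \<Phi> :: "'a \<Rightarrow> 'b"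
  assumes L: "L-lipschitz_on S \<Phi>"
    and sub: "S' \<subseteq> \<Phi> ` S"
    and ach: "achievable_rate S s"
  shows "achievable_rate S' s"
proof -
  obtain E D where cod: "is_codec S E D"
    and fin: "(SUP R\<in>{1::nat..}. ereal (real R powr s) * distortion S (E R) (D R)) < \<infinity>"
    using ach unfolding achievable_rate_def by blast
  obtain C where C: "(SUP R\<in>{1::nat..}. ereal (real R powr s) * distortion S (E R) (D R)) \<le> ereal C"
    using ereal_fin_bound[OF fin] by blast
  have L0: "0 \<le> L" using L by (simp add: lipschitz_on_def)
  have bnd: "norm (x - D R (E R x)) \<le> C / real R powr s" if "R \<ge> 1" "x \<in> S" for R x
  proof -
    have "ereal (norm (x - D R (E R x))) \<le> distortion S (E R) (D R)"
      unfolding distortion_def using that by (intro SUP_upper) auto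
    hence "ereal (real R powr s) * ereal (norm (x - D R (E R x))) \<le> ereal (real R powr s) * distortion S (E R) (D R)"
      by (intro ereal_mult_left_mono) auto
    also have "\<dots> \<le> (SUP R\<in>{1::nat..}. ereal (real R powr s) * distortion S (E R) (D R))"
      by (rule SUP_upper) (use that in simp)
    also have "\<dots> \<le> ereal C" by (rule C)
    finally have "real R powr s * norm (x - D R (E R x)) \<le> C" by simp
    moreover have "real R powr s > 0" using that by simp
    ultimately show ?thesis by (simp add: field_simps)
  qed
  define g where "g y = (SOME x. x \<in> S \<and> \<Phi> x = y)" for y
  have g: "g y \<in> S \<and> \<Phi> (g y) = y" if "y \<in> S'" for y
  proof -
    have "\<exists>x. x \<in> S \<and> \<Phi> x = y" using sub that by blast
    thus ?thesis unfolding g_def by (rule someI_ex)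
  qed
  define pick where "pick R b = (SOME x. x \<in> S \<and> E R x = b)" for R b
  define E' where "E' R y = E R (g y)" for R y
  define D' where "D' R b = \<Phi> (pick R b)" for R b
  have cod': "is_codec S' E' D'"
    using cod g unfolding is_codec_def E'_def by auto
  have bnd': "norm (y - D' R (E' R y)) \<le> 2 * L * C / real R powr s" if "R \<ge> 1" "y \<in> S'" for R y
  proof -
    have x: "g y \<in> S" "\<Phi> (g y) = y" using g that by auto
    have p: "pick R (E R (g y)) \<in> S \<and> E R (pick R (E R (g y))) = E R (g y)"
      unfolding pick_def by (rule someI[of _ "g y"]) (use x in auto)
    let ?x = "g y" and ?x' = "pick R (E R (g y))"
    have "norm (?x - ?x') \<le> norm (?x - D R (E R ?x)) + norm (?x' - D R (E R ?x'))"
      using p norm_triangle_ineq4[of "?x - D R (E R ?x)" "?x' - D R (E R ?x)"] by simp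
    also have "\<dots> \<le> C / real R powr s + C / real R powr s"
      using bnd[OF that(1) x(1)] bnd[OF that(1), of ?x'] p by (intro add_mono) auto
    finally have d: "norm (?x - ?x') \<le> 2 * (C / real R powr s)" by simp
    have "norm (y - D' R (E' R y)) = dist (\<Phi> ?x) (\<Phi> ?x')"
      unfolding D'_def E'_def using x by (simp add: dist_norm)
    also have "\<dots> \<le> L * dist ?x ?x'" using lipschitz_onD[OF L x(1)] p by blast
    also have "\<dots> \<le> L * (2 * (C / real R powr s))" using mult_left_mono[OF d L0] by (simp add: dist_norm)
    finally show ?thesis by (simp add: mult.assoc mult.left_commute)
  qed
  have "(SUP R\<in>{1::nat..}. ereal (real R powr s) * distortion S' (E' R) (D' R)) \<le> ereal (2 * L * C)"
  proof (rule SUP_least)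
    fix R :: nat assume R: "R \<in> {1..}"
    have pos: "real R powr s > 0" using R by simp
    have "distortion S' (E' R) (D' R) \<le> ereal (2 * L * C / real R powr s)"
      unfolding distortion_def using bnd' R by (intro SUP_least) auto
    hence "ereal (real R powr s) * distortion S' (E' R) (D' R) \<le> ereal (real R powr s) * ereal (2 * L * C / real R powr s)"
      by (intro ereal_mult_left_mono) auto
    also have "\<dots> = ereal (2 * L * C)" using pos by simp
    finally show "ereal (real R powr s) * distortion S' (E' R) (D' R) \<le> ereal (2 * L * C)" .
  qed
  hence "(SUP R\<in>{1::nat..}. ereal (real R powr s) * distortion S' (E' R) (D' R)) < \<infinity>"
    using order_le_less_trans by fastforce
  thus ?thesis unfolding achievable_rate_def using cod' by blast
qed

theorem lemmaA2:
  fixes S :: "'a::banach set" and S' :: "'b::banach set" and \<Phi> :: "'a \<Rightarrow> 'b"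
  assumes "\<exists>L. L-lipschitz_on S \<Phi>"
    and "S' \<subseteq> \<Phi> ` S"
  shows "optimal_rate S' \<ge> optimal_rate S"
proof -
  obtain L where L: "L-lipschitz_on S \<Phi>" using assms(1) by blast
  have "{s. s \<ge> 0 \<and> achievable_rate S s} \<subseteq> {s. s \<ge> 0 \<and> achievable_rate S' s}"
    using achievable_transfer[OF L assms(2)] by blast
  thus ?thesis unfolding optimal_rate_def by (intro Sup_subset_mono) blast
qed

end
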